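(* Let $k\ge 3$ and let $c$ be a proper coloring of $\mathcal H_k$. Then for any $i_1,i_2\in[k]$ with $i_1\equiv i_2\pmod 2$, we have $c(v_{i_1,j})=c(v_{i_2,j})$ for all $j\in[3]$.
   Context: A bi-hypergraph $\mathcal H=(V,E)$ consists of a finite vertex set $V$ and a set $E$ of subsets of $V$, called edges, with no edge contained in another. A mapping $f:V\to\mathbb N$ is a proper coloring of $\mathcal H$ if $1<|f(e)|<|e|$ for every $e\in E$, where $f(e)=\{f(v):v\in e\}$. For $k\ge 2$, $\mathcal H_k$ is the $3$-uniform bi-hypergraph with vertex set $\{v_{i,j}: i\in[k], j\in[3]\}$ (all distinct), where we use the convention $v_{i,4}=v_{i,1}$, $v_{i,5}=v_{i,2}$, and whose edges are: the sets $V_i=\{v_{i,1},v_{i,2},v_{i,3}\}$ for all $i\in[k]$, and the sets $\{v_{q+1,j},v_{q,j},v_{q,j+t}\}$ for all $q\in[k-1]$, $j\in[3]$, $t\in\{1,2\}$. *)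

theory Defs
  imports Main
begin

text \<open>A vertex v_{i,j} of H_k is encoded as the pair (i,j), i in {1..k}, j in {1..3}.
  The cyclic convention v_{i,4} = v_{i,1}, v_{i,5} = v_{i,2} is realised by wrap3.\<close>

definition wrap3 :: "nat \<Rightarrow> nat" where
  "wrap3 n = ((n - 1) mod 3) + 1"

definition Hk_vertices :: "nat \<Rightarrow> (nat \<times> nat) set" where
  "Hk_vertices k = {1..k} \<times> {1..3}"

definition Hk_edges :: "nat \<Rightarrow> (nat \<times> nat) set set" where
  "Hk_edges k =
     {{(i,1),(i,2),(i,3)} | i. i \<in> {1..k}}
     \<union> {{(q+1,j),(q,j),(q, wrap3 (j+t))} | q j t.
          q \<in> {1..k-1} \<and> j \<in> {1..3} \<and> t \<in> {1,2}}"

definition proper_coloring :: "'v set set \<Rightarrow> ('v \<Rightarrow> nat) \<Rightarrow> bool" where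
  "proper_coloring E f \<longleftrightarrow> (\<forall>e\<in>E. 1 < card (f ` e) \<and> card (f ` e) < card e)"

end

theory Submission
  imports Defs
begin

definition two :: "nat \<Rightarrow> nat \<Rightarrow> nat \<Rightarrow> bool" where
  "two x y z \<longleftrightarrow> (x=y\<and>y\<noteq>z)\<or>(x=z\<and>x\<noteq>y)\<or>(y=z\<and>x\<noteq>y)"

lemma card_two: "1 < card {x,y,z::nat} \<and> card {x,y,z} < 3 \<Longrightarrow> two x y z"
  unfolding two_def by (cases "x=y"; cases "x=z"; cases "y=z"; auto simp: card_insert_if)

lemma P: assumes "proper_coloring E c" "{u,v,w} \<in> E" "u\<noteq>v" "u\<noteq>w" "v\<noteq>w"
  shows "two (c u) (c v) (c w)"
proof -
  have "card {u,v,w} = 3" using assms(3-5) by simp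
  moreover have "c ` {u,v,w} = {c u, c v, c w}" by simp
  ultimately show ?thesis using assms(1,2) unfolding proper_coloring_def
    by (intro card_two) (metis)
qed

lemma edge_row: "i \<in> {1..k} \<Longrightarrow> {(i,1),(i,2),(i,3)} \<in> Hk_edges k"
  unfolding Hk_edges_def by blast

lemma edge_in: "q\<in>{1..k-1} \<Longrightarrow> j\<in>{1..3} \<Longrightarrow> t\<in>{1,2} \<Longrightarrow>
   {(q+1,j),(q,j),(q,wrap3(j+t))} \<in> Hk_edges k"
  unfolding Hk_edges_def by blast

lemma swap:
  assumes "two a1 a2 a3" "two b1 b2 b3"
    "two b1 a1 a2" "two b1 a1 a3" "two b2 a2 a3" "two b2 a2 a1" "two b3 a3 a1" "two b3 a3 a2"
  shows "b1 \<noteq> a1 \<and> b1 \<in> {a1,a2,a3} \<and> b2 \<noteq> a2 \<and> b2 \<in> {a1,a2,a3} \<and> b3 \<noteq> a3 \<and> b3 \<in> {a1,a2,a3}"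
  using assms unfolding two_def by auto

lemma swap2:
  assumes "two a1 a2 a3" "two b1 b2 b3" "two c1 c2 c3"
    "b1 \<noteq> a1 \<and> b1 \<in> {a1,a2,a3} \<and> b2 \<noteq> a2 \<and> b2 \<in> {a1,a2,a3} \<and> b3 \<noteq> a3 \<and> b3 \<in> {a1,a2,a3}"
    "c1 \<noteq> b1 \<and> c1 \<in> {b1,b2,b3} \<and> c2 \<noteq> b2 \<and> c2 \<in> {b1,b2,b3} \<and> c3 \<noteq> b3 \<and> c3 \<in> {b1,b2,b3}"
  shows "c1 = a1 \<and> c2 = a2 \<and> c3 = a3"
  using assms unfolding two_def by auto

lemma rowtwo: assumes "proper_coloring (Hk_edges k) c" "i \<in> {1..k}"
  shows "two (c (i,1)) (c (i,2)) (c (i,3))"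
  using P[OF assms(1) edge_row[OF assms(2)]] by simp

lemma adj: assumes pc: "proper_coloring (Hk_edges k) c" and q: "1 \<le> q" "q+1 \<le> k"
  shows "c (q+1,1) \<noteq> c (q,1) \<and> c (q+1,1) \<in> {c (q,1), c (q,2), c (q,3)} \<and>
         c (q+1,2) \<noteq> c (q,2) \<and> c (q+1,2) \<in> {c (q,1), c (q,2), c (q,3)} \<and>
         c (q+1,3) \<noteq> c (q,3) \<and> c (q+1,3) \<in> {c (q,1), c (q,2), c (q,3)}"
proof -
  have qk: "q \<in> {1..k-1}" using q by auto
  have e: "two (c (q+1,j)) (c (q,j)) (c (q, wrap3 (j+t)))" if "j\<in>{1..3}" "t\<in>{1,2}" for j t
  proof -
    have "j=1\<or>j=2\<or>j=3" "t=1\<or>t=2" using that by auto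
    then have "wrap3 (j+t) \<noteq> j" by (elim disjE; simp add: wrap3_def)
    then show ?thesis using P[OF pc edge_in[OF qk that]] by simp
  qed
  have w: "wrap3 (1+1) = 2" "wrap3 (1+2) = 3" "wrap3 (2+1) = 3" "wrap3 (2+2) = 1" "wrap3 (3+1) = 1" "wrap3 (3+2) = 2"
    by (simp_all add: wrap3_def)
  show ?thesis
    apply (rule swap[OF rowtwo[OF pc] rowtwo[OF pc]])
    using q e[of 1 1, unfolded w] e[of 1 2, unfolded w] e[of 2 1, unfolded w] e[of 2 2, unfolded w]
      e[of 3 1, unfolded w] e[of 3 2, unfolded w] by simp_all
qed

lemma step: assumes pc: "proper_coloring (Hk_edges k) c" and q: "1 \<le> q" "q+2 \<le> k"
  and j: "j \<in> {1..3}"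
  shows "c (q+2, j) = c (q, j)"
proof -
  have a1: "q \<in> {1..k}" "q+1 \<in> {1..k}" "q+2 \<in> {1..k}" using q by auto
  have h1: "c (q+1,1) \<noteq> c (q,1) \<and> c (q+1,1) \<in> {c (q,1), c (q,2), c (q,3)} \<and>
         c (q+1,2) \<noteq> c (q,2) \<and> c (q+1,2) \<in> {c (q,1), c (q,2), c (q,3)} \<and>
         c (q+1,3) \<noteq> c (q,3) \<and> c (q+1,3) \<in> {c (q,1), c (q,2), c (q,3)}"
    by (rule adj[OF pc q(1)]) (use q in simp)
  have h2: "c (q+1+1,1) \<noteq> c (q+1,1) \<and> c (q+1+1,1) \<in> {c (q+1,1), c (q+1,2), c (q+1,3)} \<and>
         c (q+1+1,2) \<noteq> c (q+1,2) \<and> c (q+1+1,2) \<in> {c (q+1,1), c (q+1,2), c (q+1,3)} \<and>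
         c (q+1+1,3) \<noteq> c (q+1,3) \<and> c (q+1+1,3) \<in> {c (q+1,1), c (q+1,2), c (q+1,3)}"
    by (rule adj[OF pc]) (use q in auto)
  have "c (q+1+1,1) = c (q,1) \<and> c (q+1+1,2) = c (q,2) \<and> c (q+1+1,3) = c (q,3)"
    by (rule swap2[OF rowtwo[OF pc a1(1)] rowtwo[OF pc a1(2)] rowtwo[OF pc] h1 h2]) (use q in auto)
  then have "c (q+2,1) = c (q,1) \<and> c (q+2,2) = c (q,2) \<and> c (q+2,3) = c (q,3)"
    by (simp add: numeral_2_eq_2)
  moreover have "j=1\<or>j=2\<or>j=3" using j by auto
  ultimately show ?thesis by auto
qed

lemma iter: assumes pc: "proper_coloring (Hk_edges k) c" "1 \<le> i" "j \<in> {1..3}"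
  shows "i + 2*m \<le> k \<Longrightarrow> c (i+2*m, j) = c (i, j)"
proof (induction m)
  case 0 then show ?case by simp
next
  case (Suc m)
  have "c (i+2*m+2, j) = c (i+2*m, j)" using step[OF pc(1) _ _ pc(3), of "i+2*m"] Suc.prems pc(2) by simp
  then show ?case using Suc by simp
qed

theorem mainTheorem14:
  fixes k :: nat and c :: "nat \<times> nat \<Rightarrow> nat" and i1 i2 j :: nat
  assumes "k \<ge> 3"
    and "proper_coloring (Hk_edges k) c"
    and "i1 \<in> {1..k}" and "i2 \<in> {1..k}"
    and "i1 mod 2 = i2 mod 2"
    and "j \<in> {1..3}"
  shows "c (i1, j) = c (i2, j)"
proof (cases "i1 \<le> i2")
  case True
  then obtain m where "i2 = i1 + 2*m" using assms(5) by (metis le_add_diff_inverse mod_eq_dvd_iff_nat dvdE)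
  then show ?thesis using iter[OF assms(2) _ assms(6), of i1 m] assms(3,4) by simp
next
  case False
  then obtain m where "i1 = i2 + 2*m" using assms(5)
    by (metis nat_le_linear le_add_diff_inverse mod_eq_dvd_iff_nat dvdE)
  then show ?thesis using iter[OF assms(2) _ assms(6), of i2 m] assms(3,4) by simp
qed

end
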